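(* Let $q\ge1$ be an integer and let $X$ be a random variable such that $qX$ is integer-valued almost surely. Then for every integer $r\ge1$ with $\mathbb E|X|^r<\infty$, \[ \mathbb E\big(\lfloor X\rfloor^r\big)=\mathrm i^{-r}\sum_{j=0}^{q-1}\frac{d^r}{dt^r}\big(h_q(t)\varphi_X(t)\big)\Big|_{t=2\pi j} \quad\text{and}\quad \mathbb E\big(\langle X\rangle^r\big)=\mathrm i^{-r}\sum_{j=0}^{q-1}\frac{d^r}{dt^r}\big(\tilde h_q(t)\varphi_X(t)\big)\Big|_{t=2\pi j}. \]
   Context: For a random variable $Y$, $\varphi_Y(t):=\mathbb E\, e^{\mathrm i tY}$ is its characteristic function. $\lfloor x\rfloor$ is $x$ rounded down to an integer, and $\langle x\rangle:=\lfloor x+\tfrac12\rfloor$ is $x$ rounded to the nearest integer, with ties broken upward. Define \[ h_q(t):=\frac1q\sum_{k=0}^{q-1}e^{-\mathrm i tk/q}. \] If $q$ is even, define $\tilde h_q(t):=\frac1q\sum_{k=-q/2}^{q/2-1}e^{-\mathrm i tk/q}$. If $q$ is odd, define $\tilde h_q(t):=\frac1q\sum_{k=-(q-1)/2}^{(q-1)/2}e^{-\mathrm i tk/q}$. *)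

theory Defs
  imports "HOL-Probability.Probability"
begin

definition charfun :: "'a measure \<Rightarrow> ('a \<Rightarrow> real) \<Rightarrow> real \<Rightarrow> complex" where
  "charfun M X t = char (distr M borel X) t"

text \<open>Rounding to the nearest integer, ties broken upward.\<close>
definition round_near :: "real \<Rightarrow> int" where
  "round_near x = \<lfloor>x + 1/2\<rfloor>"

definition h :: "nat \<Rightarrow> real \<Rightarrow> complex" where
  "h q t = (1 / of_nat q) * (\<Sum>k = 0..<int q. exp (- \<i> * of_real t * of_int k / of_nat q))"

definition h_tilde :: "nat \<Rightarrow> real \<Rightarrow> complex" where
  "h_tilde q t =
     (if even q
      then (1 / of_nat q) * (\<Sum>k = - (int q div 2) .. int q div 2 - 1.
              exp (- \<i> * of_real t * of_int k / of_nat q))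
      else (1 / of_nat q) * (\<Sum>k = - ((int q - 1) div 2) .. (int q - 1) div 2.
              exp (- \<i> * of_real t * of_int k / of_nat q)))"

fun nth_deriv :: "nat \<Rightarrow> (real \<Rightarrow> complex) \<Rightarrow> real \<Rightarrow> complex" where
  "nth_deriv 0 f = f"
| "nth_deriv (Suc n) f = (\<lambda>t. vector_derivative (nth_deriv n f) (at t))"

end

theory Submission imports Defs begin

definition Fm :: "'a measure \<Rightarrow> ('a \<Rightarrow> real) \<Rightarrow> nat \<Rightarrow> real \<Rightarrow> complex" where
  "Fm M Y n t = (\<integral>x. (\<i> * complex_of_real (Y x)) ^ n * iexp (t * Y x) \<partial>M)"

lemma integrable_Fm_integrand:
  assumes "Y \<in> borel_measurable M" "integrable M (\<lambda>x. \<bar>Y x\<bar> ^ n)"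
  shows "integrable M (\<lambda>x. (\<i> * complex_of_real (Y x)) ^ n * iexp (t * Y x))"
proof -
  have "integrable M (\<lambda>x. norm ((\<i> * complex_of_real (Y x)) ^ n * iexp (t * Y x)))"
    using assms(2) by (simp add: norm_mult norm_power)
  then show ?thesis
    by (subst integrable_norm_iff[symmetric]) (use assms(1) in measurable)
qed

lemma iexp_bound1: "cmod (iexp x - 1 - \<i> * complex_of_real x) \<le> x^2 / 2"
  using iexp_approx1[of x 1] by (simp add: numeral_2_eq_2 diff_diff_eq)

lemma iexp_bound2: "cmod (iexp x - 1 - \<i> * complex_of_real x) \<le> 2 * \<bar>x\<bar>"
  using iexp_approx2[of x 1] by (simp add: diff_diff_eq)

lemma Fm_deriv:
  assumes P: "prob_space M" and Ym: "Y \<in> borel_measurable M"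
    and I0: "integrable M (\<lambda>x. \<bar>Y x\<bar> ^ n)" and I1: "integrable M (\<lambda>x. \<bar>Y x\<bar> ^ Suc n)"
  shows "(Fm M Y n has_vector_derivative Fm M Y (Suc n) t) (at t)"
proof -
  let ?D = "Fm M Y (Suc n) t"
  define g where "g h x = (\<i> * complex_of_real (Y x)) ^ n * iexp (t * Y x) *
        (iexp (h * Y x) - 1 - \<i> * complex_of_real (h * Y x)) / complex_of_real h" for h x
  have intF: "integrable M (\<lambda>x. (\<i> * complex_of_real (Y x)) ^ m * iexp (s * Y x))"
    if "m = n \<or> m = Suc n" for m s
    using that integrable_Fm_integrand[OF Ym I0] integrable_Fm_integrand[OF Ym I1] by blast
  have eq: "(Fm M Y n (t + h) - Fm M Y n t - h *\<^sub>R ?D) / complex_of_real h = (\<integral>x. g h x \<partial>M)"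
    if "h \<noteq> 0" for h
  proof -
    have "Fm M Y n (t + h) - Fm M Y n t - h *\<^sub>R ?D =
       (\<integral>x. (\<i> * complex_of_real (Y x)) ^ n * iexp ((t+h) * Y x) - (\<i> * complex_of_real (Y x)) ^ n * iexp (t * Y x)
          - complex_of_real h * ((\<i> * complex_of_real (Y x)) ^ Suc n * iexp (t * Y x)) \<partial>M)"
      unfolding Fm_def scaleR_conv_of_real
      using intF[of n "t+h"] intF[of n t] intF[of "Suc n" t]
      by (simp add: integral_diff integrable_diff integral_mult_right_zero)
    also have "\<dots> = (\<integral>x. g h x * complex_of_real h \<partial>M)"
      using that unfolding g_def
      by (intro Bochner_Integration.integral_cong refl)
         (simp add: exp_add divide_simps, simp add: algebra_simps exp_add[symmetric])
    finally show ?thesis using that by simp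
  qed
  have lim: "(\<lambda>i. \<integral>x. g (H i) x \<partial>M) \<longlonglongrightarrow> 0" if H0: "\<forall>i. H i \<noteq> 0" and HL: "H \<longlonglongrightarrow> 0" for H
  proof -
    have "(\<lambda>i. \<integral>x. g (H i) x \<partial>M) \<longlonglongrightarrow> (\<integral>x. 0 \<partial>M)"
    proof (rule integral_dominated_convergence[where w="\<lambda>x. 2 * \<bar>Y x\<bar> ^ Suc n"])
      show "(\<lambda>x. 0::complex) \<in> borel_measurable M" by simp
      show "g (H i) \<in> borel_measurable M" for i unfolding g_def using Ym by measurable
      show "integrable M (\<lambda>x. 2 * \<bar>Y x\<bar> ^ Suc n)" using I1 by simp
      show "AE x in M. (\<lambda>i. g (H i) x) \<longlonglongrightarrow> 0"
      proof (rule AE_I2)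
        fix x
        have "\<forall>\<^sub>F i in sequentially. norm (g (H i) x) \<le> \<bar>Y x\<bar> ^ (n+2) * \<bar>H i\<bar> / 2"
        proof (intro always_eventually allI)
          fix i
          have "norm (g (H i) x) = \<bar>Y x\<bar> ^ n * cmod (iexp (H i * Y x) - 1 - \<i> * complex_of_real (H i * Y x)) / \<bar>H i\<bar>"
            unfolding g_def by (simp add: norm_mult norm_power norm_divide)
          also have "\<dots> \<le> \<bar>Y x\<bar> ^ n * ((H i * Y x)^2/2) / \<bar>H i\<bar>"
            by (intro divide_right_mono mult_left_mono iexp_bound1) auto
          also have "\<dots> = \<bar>Y x\<bar> ^ (n+2) * \<bar>H i\<bar> / 2"
            using H0 by (simp add: power2_eq_square power_add field_simps abs_mult)
          finally show "norm (g (H i) x) \<le> \<bar>Y x\<bar> ^ (n+2) * \<bar>H i\<bar> / 2" .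
        qed
        moreover have "(\<lambda>i. \<bar>Y x\<bar> ^ (n+2) * \<bar>H i\<bar> / 2) \<longlonglongrightarrow> 0"
          using HL by (auto intro!: tendsto_eq_intros)
        ultimately show "(\<lambda>i. g (H i) x) \<longlonglongrightarrow> 0" by (rule Lim_null_comparison)
      qed
      show "AE x in M. norm (g (H i) x) \<le> 2 * \<bar>Y x\<bar> ^ Suc n" for i
      proof (intro AE_I2)
        fix x
        have "norm (g (H i) x) = \<bar>Y x\<bar> ^ n * cmod (iexp (H i * Y x) - 1 - \<i> * complex_of_real (H i * Y x)) / \<bar>H i\<bar>"
          unfolding g_def by (simp add: norm_mult norm_power norm_divide)
        also have "\<dots> \<le> \<bar>Y x\<bar> ^ n * (2 * \<bar>H i * Y x\<bar>) / \<bar>H i\<bar>"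
          by (intro divide_right_mono mult_left_mono iexp_bound2) auto
        also have "\<dots> = 2 * \<bar>Y x\<bar> ^ Suc n"
          using H0 by (simp add: abs_mult field_simps)
        finally show "norm (g (H i) x) \<le> 2 * \<bar>Y x\<bar> ^ Suc n" .
      qed
    qed
    then show ?thesis by simp
  qed
  show ?thesis
    unfolding has_vector_derivative_def has_derivative_at
  proof (intro conjI)
    show "bounded_linear (\<lambda>h. h *\<^sub>R ?D)" by (rule bounded_linear_scaleR_left)
    show "(\<lambda>h. norm (Fm M Y n (t + h) - Fm M Y n t - h *\<^sub>R ?D) / norm h) \<midarrow>0\<rightarrow> 0"
      unfolding tendsto_at_iff_sequentially
    proof (intro allI impI)
      fix H :: "nat \<Rightarrow> real" assume H0: "\<forall>i. H i \<in> UNIV - {0}" and HL: "H \<longlonglongrightarrow> 0"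
      have "(\<lambda>i. norm (\<integral>x. g (H i) x \<partial>M)) \<longlonglongrightarrow> 0"
        using lim[of H] H0 HL by (simp add: tendsto_norm_zero_iff)
      moreover have "norm (\<integral>x. g (H i) x \<partial>M) = ((\<lambda>h. norm (Fm M Y n (t + h) - Fm M Y n t - h *\<^sub>R ?D) / norm h) \<circ> H) i" for i
        using H0 by (simp add: eq[of "H i", symmetric] norm_divide)
      ultimately show "((\<lambda>h. norm (Fm M Y n (t + h) - Fm M Y n t - h *\<^sub>R ?D) / norm h) \<circ> H) \<longlonglongrightarrow> 0"
        by (simp add: comp_def)
    qed
  qed
qed

lemma moment_shift_bound:
  fixes x c :: real assumes "m \<le> r"
  shows "\<bar>x - c\<bar> ^ m \<le> 2 ^ m * (1 + \<bar>x\<bar> ^ r + \<bar>c\<bar> ^ m)"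
proof -
  have "\<bar>x - c\<bar> \<le> 2 * max \<bar>x\<bar> \<bar>c\<bar>" by linarith
  then have "\<bar>x - c\<bar> ^ m \<le> (2 * max \<bar>x\<bar> \<bar>c\<bar>) ^ m" by (intro power_mono) auto
  also have "\<dots> = 2 ^ m * max \<bar>x\<bar> \<bar>c\<bar> ^ m" by (simp add: power_mult_distrib)
  also have "max \<bar>x\<bar> \<bar>c\<bar> ^ m \<le> \<bar>x\<bar> ^ m + \<bar>c\<bar> ^ m" by (simp add: max_def)
  also have "\<bar>x\<bar> ^ m \<le> 1 + \<bar>x\<bar> ^ r"
  proof (cases "\<bar>x\<bar> \<le> 1")
    case True then have "\<bar>x\<bar> ^ m \<le> 1" by (simp add: power_le_one)
    then show ?thesis by (simp add: add_increasing2)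
  next
    case False then have "\<bar>x\<bar> ^ m \<le> \<bar>x\<bar> ^ r" by (intro power_increasing assms) auto
    then show ?thesis by simp
  qed
  finally show ?thesis by (simp add: mult_left_mono)
qed

lemma integrable_moment_shift:
  fixes X :: "'a \<Rightarrow> real" and c :: real
  assumes P: "prob_space M" and Xm: "X \<in> borel_measurable M"
    and I: "integrable M (\<lambda>x. \<bar>X x\<bar> ^ r)" and "m \<le> r"
  shows "integrable M (\<lambda>x. \<bar>X x - c\<bar> ^ m)"
proof (rule Bochner_Integration.integrable_bound[where f="\<lambda>x. (2::real) ^ m * (1 + \<bar>X x\<bar> ^ r + \<bar>c\<bar> ^ m)"])
  interpret prob_space M by fact
  show "integrable M (\<lambda>x. 2 ^ m * (1 + \<bar>X x\<bar> ^ r + \<bar>c\<bar> ^ m))"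
    using I by (intro integrable_mult_right integrable_add) auto
  show "(\<lambda>x. \<bar>X x - c\<bar> ^ m) \<in> borel_measurable M" using Xm by measurable
  show "AE x in M. norm (\<bar>X x - c\<bar> ^ m) \<le> norm (2 ^ m * (1 + \<bar>X x\<bar> ^ r + \<bar>c\<bar> ^ m))"
    using moment_shift_bound[OF assms(4)] by (intro AE_I2) (simp add: abs_mult)
qed

lemma sum_rou:
  fixes y :: real assumes q: "q \<ge> 1" and qy: "real q * y \<in> \<int>"
  shows "(\<Sum>j<q. iexp (2 * pi * real j * y)) = (if y \<in> \<int> then of_nat q else 0)"
proof -
  define w where "w = iexp (2 * pi * y)"
  have pw: "iexp (2 * pi * real j * y) = w ^ j" for j
    unfolding w_def by (subst exp_of_nat_mult[symmetric]) (simp add: algebra_simps)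
  show ?thesis
  proof (cases "y \<in> \<int>")
    case True
    then obtain n where n: "y = of_int n" by (auto elim: Ints_cases)
    have "w = 1" unfolding w_def n exp_eq_1 by (auto intro!: exI[of _ n] simp: algebra_simps)
    then show ?thesis using True unfolding pw by simp
  next
    case False
    have "w \<noteq> 1"
    proof
      assume "w = 1"
      then obtain n :: int where "2 * pi * y = of_int (2 * n) * pi" unfolding w_def exp_eq_1 by auto
      then have "y = of_int n" by simp
      then show False using False by simp
    qed
    moreover have "w ^ q = 1"
    proof -
      from qy obtain n where n: "real q * y = of_int n" by (auto elim: Ints_cases)
      have n': "y * real q = real_of_int n" using n by (simp add: mult.commute)
      have "w ^ q = iexp (2 * pi * real q * y)" by (simp only: pw)
      also have "\<dots> = 1" unfolding exp_eq_1 by (auto intro!: exI[of _ n] simp: n n' algebra_simps)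
      finally show ?thesis .
    qed
    ultimately show ?thesis using False unfolding pw by (simp add: geometric_sum)
  qed
qed

lemma pointwise_pick:
  fixes X :: real and K :: "int set"
  assumes q: "q \<ge> 1" and qX: "real q * X \<in> \<int>" and K: "finite K"
    and k0: "k0 \<in> K" "real_of_int gx = X - of_int k0 / real q"
    and uniq: "\<forall>k\<in>K. X - of_int k / real q \<in> \<int> \<longrightarrow> k = k0"
  shows "(1 / of_nat q) * (\<Sum>k\<in>K. \<Sum>j<q. (\<i> * complex_of_real (X - of_int k / real q)) ^ r
            * iexp (2 * pi * real j * (X - of_int k / real q)))
         = \<i> ^ r * complex_of_real (real_of_int gx ^ r)"
proof -
  have qk: "real q * (X - of_int k / real q) \<in> \<int>" for k
  proof -
    have "real q * (X - of_int k / real q) = real q * X - of_int k" using q by (simp add: field_simps)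
    then show ?thesis using qX by (simp add: Ints_diff)
  qed
  have inner: "(\<Sum>j<q. (\<i> * complex_of_real (X - of_int k / real q)) ^ r
            * iexp (2 * pi * real j * (X - of_int k / real q)))
        = (\<i> * complex_of_real (X - of_int k / real q)) ^ r *
          (if X - of_int k / real q \<in> \<int> then of_nat q else 0)" for k
    by (subst sum_distrib_left[symmetric], subst sum_rou[OF q qk], rule refl)
  have "(\<Sum>k\<in>K. \<Sum>j<q. (\<i> * complex_of_real (X - of_int k / real q)) ^ r
            * iexp (2 * pi * real j * (X - of_int k / real q)))
     = (\<Sum>k\<in>K. (\<i> * complex_of_real (X - of_int k / real q)) ^ r *
          (if X - of_int k / real q \<in> \<int> then of_nat q else 0))"
    by (simp only: inner)
  also have "\<dots> = (\<i> * complex_of_real (X - of_int k0 / real q)) ^ r * of_nat q"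
  proof -
    have Z: "X - of_int k0 / real q \<in> \<int>" using k0(2) by (metis Ints_of_int)
    have "(\<Sum>k\<in>K. (\<i> * complex_of_real (X - of_int k / real q)) ^ r *
          (if X - of_int k / real q \<in> \<int> then of_nat q else 0))
       = (\<i> * complex_of_real (X - of_int k0 / real q)) ^ r * (if X - of_int k0 / real q \<in> \<int> then of_nat q else 0)
         + (\<Sum>k\<in>K - {k0}. (\<i> * complex_of_real (X - of_int k / real q)) ^ r *
          (if X - of_int k / real q \<in> \<int> then of_nat q else 0))"
      using K k0(1) by (simp add: sum.remove)
    also have "(\<Sum>k\<in>K - {k0}. (\<i> * complex_of_real (X - of_int k / real q)) ^ r *
          (if X - of_int k / real q \<in> \<int> then of_nat q else 0)) = 0"
      using uniq by (intro sum.neutral) auto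
    finally show ?thesis using Z by simp
  qed
  finally show ?thesis using q k0(2)
    by (simp add: power_mult_distrib)
qed

lemma main_gen:
  fixes M :: "'a measure" and X :: "'a \<Rightarrow> real" and g :: "'a \<Rightarrow> int" and K :: "int set"
    and H :: "real \<Rightarrow> complex"
  assumes P: "prob_space M" and Xm: "X \<in> borel_measurable M" and q: "q \<ge> 1"
    and qX: "AE x in M. real q * X x \<in> \<int>"
    and I: "integrable M (\<lambda>x. \<bar>X x\<bar> ^ r)"
    and K: "finite K"
    and rep: "AE x in M. \<exists>k0\<in>K. real_of_int (g x) = X x - of_int k0 / real q \<and>
                 (\<forall>k\<in>K. X x - of_int k / real q \<in> \<int> \<longrightarrow> k = k0)"
    and gm: "(\<lambda>x. real_of_int (g x)) \<in> borel_measurable M"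
    and H: "\<And>t. H t = (1 / of_nat q) * (\<Sum>k\<in>K. exp (- \<i> * of_real t * of_int k / of_nat q))"
  shows "complex_of_real (\<integral>x. real_of_int (g x) ^ r \<partial>M)
           = \<i> powi (- int r) * (\<Sum>j<q. nth_deriv r (\<lambda>t. H t * charfun M X t) (2 * pi * real j))"
proof -
  interpret prob_space M by fact
  define Y where "Y k x = X x - of_int k / real q" for k x
  define G where "G n t = (1 / of_nat q) * (\<Sum>k\<in>K. Fm M (Y k) n t)" for n t
  have Ym: "Y k \<in> borel_measurable M" for k unfolding Y_def using Xm by measurable
  note Ym[measurable]
  have IY: "integrable M (\<lambda>x. \<bar>Y k x\<bar> ^ m)" if "m \<le> r" for k m
    unfolding Y_def by (rule integrable_moment_shift[OF P Xm I that])
  have base: "(\<lambda>t. H t * charfun M X t) = G 0"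
  proof
    fix t
    have ch: "charfun M X t = (\<integral>x. iexp (t * X x) \<partial>M)"
      unfolding charfun_def char_def using Xm by (simp add: integral_distr)
    have "exp (- \<i> * of_real t * of_int k / of_nat q) * charfun M X t = Fm M (Y k) 0 t" for k
    proof -
      have "exp (- \<i> * of_real t * of_int k / of_nat q) * charfun M X t
          = (\<integral>x. exp (- \<i> * of_real t * of_int k / of_nat q) * iexp (t * X x) \<partial>M)"
        unfolding ch by simp
      also have "\<dots> = Fm M (Y k) 0 t"
        unfolding Fm_def Y_def
        by (intro Bochner_Integration.integral_cong refl)
           (simp add: exp_add[symmetric] algebra_simps diff_divide_distrib)
      finally show ?thesis .
    qed
    then show "H t * charfun M X t = G 0 t"
      unfolding H G_def by (simp add: sum_distrib_right mult.assoc)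
  qed
  have step: "n \<le> r \<Longrightarrow> nth_deriv n (\<lambda>t. H t * charfun M X t) = G n" for n
  proof (induction n)
    case 0 then show ?case using base by simp
  next
    case (Suc n)
    have "(G n has_vector_derivative G (Suc n) t) (at t)" for t
      unfolding G_def
      by (intro has_vector_derivative_mult_right has_vector_derivative_sum Fm_deriv[OF P Ym] IY)
         (use Suc.prems in auto)
    then show ?case using Suc by (auto intro!: vector_derivative_at)
  qed
  define \<Phi> where "\<Phi> x = (1 / of_nat q) * (\<Sum>k\<in>K. \<Sum>j<q. (\<i> * complex_of_real (Y k x)) ^ r
            * iexp (2 * pi * real j * Y k x))" for x
  have intg: "integrable M (\<lambda>x. (\<i> * complex_of_real (Y k x)) ^ r * iexp (s * Y k x))" for k s
    by (rule integrable_Fm_integrand[OF Ym IY]) simp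
  have "(\<Sum>j<q. G r (2 * pi * real j)) = (\<integral>x. \<Phi> x \<partial>M)"
  proof -
    have "(\<integral>x. \<Phi> x \<partial>M) = (1 / of_nat q) * (\<Sum>k\<in>K. \<Sum>j<q. Fm M (Y k) r (2 * pi * real j))"
    proof -
      have i1: "integrable M (\<lambda>x. (\<i> * complex_of_real (Y k x)) ^ r * iexp ((2 * pi * real j) * Y k x))" for k j
        by (rule intg)
      have "(\<integral>x. (\<Sum>k\<in>K. \<Sum>j<q. (\<i> * complex_of_real (Y k x)) ^ r * iexp ((2 * pi * real j) * Y k x)) \<partial>M)
         = (\<Sum>k\<in>K. \<integral>x. (\<Sum>j<q. (\<i> * complex_of_real (Y k x)) ^ r * iexp ((2 * pi * real j) * Y k x)) \<partial>M)"
        by (rule Bochner_Integration.integral_sum[where f="\<lambda>k x. \<Sum>j<q. (\<i> * complex_of_real (Y k x)) ^ r * iexp ((2 * pi * real j) * Y k x)"]) (intro Bochner_Integration.integrable_sum i1)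
      also have "\<dots> = (\<Sum>k\<in>K. \<Sum>j<q. \<integral>x. (\<i> * complex_of_real (Y k x)) ^ r * iexp ((2 * pi * real j) * Y k x) \<partial>M)"
        by (intro sum.cong refl Bochner_Integration.integral_sum i1)
      finally show ?thesis unfolding \<Phi>_def Fm_def by simp
    qed
    also have "\<dots> = (\<Sum>j<q. G r (2 * pi * real j))"
      unfolding G_def by (simp add: sum_distrib_left sum.swap[of _ K])
    finally show ?thesis by simp
  qed
  also have "(\<integral>x. \<Phi> x \<partial>M) = (\<integral>x. \<i> ^ r * complex_of_real (real_of_int (g x) ^ r) \<partial>M)"
  proof (rule integral_cong_AE)
    show "\<Phi> \<in> borel_measurable M" unfolding \<Phi>_def using Xm by measurable
    show "(\<lambda>x. \<i> ^ r * complex_of_real (real_of_int (g x) ^ r)) \<in> borel_measurable M" using gm by measurable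
    show "AE x in M. \<Phi> x = \<i> ^ r * complex_of_real (real_of_int (g x) ^ r)"
      using qX rep
    proof eventually_elim
      case (elim x)
      then obtain k0 where "k0 \<in> K" "real_of_int (g x) = X x - of_int k0 / real q"
         "\<forall>k\<in>K. X x - of_int k / real q \<in> \<int> \<longrightarrow> k = k0" by blast
      then show ?case unfolding \<Phi>_def Y_def using pointwise_pick[OF q elim(1) K] by blast
    qed
  qed
  also have "\<dots> = \<i> ^ r * complex_of_real (\<integral>x. real_of_int (g x) ^ r \<partial>M)"
    by (simp only: integral_mult_right_zero integral_complex_of_real)
  finally have SG: "(\<Sum>j<q. G r (2 * pi * real j)) = \<i> ^ r * complex_of_real (\<integral>x. real_of_int (g x) ^ r \<partial>M)" .
  have one: "\<i> powi (- int r) * \<i> ^ r = 1"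
    by (simp add: power_int_minus power_int_of_nat field_simps)
  have dr: "nth_deriv r (\<lambda>t. H t * charfun M X t) = G r" by (rule step) simp
  have "\<i> powi (- int r) * (\<Sum>j<q. nth_deriv r (\<lambda>t. H t * charfun M X t) (2 * pi * real j))
      = (\<i> powi (- int r) * \<i> ^ r) * complex_of_real (\<integral>x. real_of_int (g x) ^ r \<partial>M)"
    unfolding dr SG by (simp only: mult.assoc)
  also have "\<dots> = complex_of_real (\<integral>x. real_of_int (g x) ^ r \<partial>M)" unfolding one by simp
  finally show ?thesis by simp
qed

lemma int_mult_small:
  fixes q d :: int assumes "q > 0" "\<bar>q * d\<bar> < q" shows "d = 0"
proof (rule ccontr)
  assume "d \<noteq> 0"
  then have "1 \<le> \<bar>d\<bar>" by simp
  then have "q * 1 \<le> q * \<bar>d\<bar>" using assms(1) by (intro mult_left_mono) auto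
  then show False using assms by (simp add: abs_mult)
qed

lemma rep_lemma:
  fixes q :: nat and m gx kz :: int and X :: real and K :: "int set"
  assumes q: "q \<ge> 1" and m: "real q * X = of_int m" and kz: "kz \<in> K" "kz = m - int q * gx"
    and close: "\<forall>k\<in>K. \<forall>k'\<in>K. \<bar>k - k'\<bar> < int q"
  shows "\<exists>kk\<in>K. real_of_int gx = X - of_int kk / real q \<and> (\<forall>k\<in>K. X - of_int k / real q \<in> \<int> \<longrightarrow> k = kk)"
proof (intro bexI[OF _ kz(1)] conjI ballI impI)
  have X: "X = of_int m / real q" using m q by (simp add: field_simps)
  show "real_of_int gx = X - of_int kz / real q"
    unfolding X kz(2) using q by (simp add: field_simps)
  fix k assume kK: "k \<in> K" and "X - of_int k / real q \<in> \<int>"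
  then obtain j where j: "X - of_int k / real q = of_int j" by (auto elim: Ints_cases)
  then have "real_of_int m - of_int k = real q * of_int j" unfolding X using q by (simp add: field_simps)
  then have "real_of_int (m - k) = real_of_int (int q * j)" by simp
  then have "m - k = int q * j" by (simp only: of_int_eq_iff)
  then have kj: "k = m - int q * j" by simp
  have "\<bar>k - kz\<bar> < int q" using close kK kz(1) by blast
  moreover have "k - kz = int q * (gx - j)" unfolding kj kz(2) by (simp add: right_diff_distrib)
  ultimately have "\<bar>int q * (gx - j)\<bar> < int q" by simp
  then have "gx - j = 0" using q by (intro int_mult_small) auto
  then show "k = kz" using kj kz(2) by simp
qed

lemma inK_aux:
  fixes Q kk :: int assumes "Q \<ge> 0" "- Q \<le> 2 * kk" "2 * kk < Q"
  shows "kk \<in> (if even Q then {- (Q div 2) .. Q div 2 - 1} else {- ((Q - 1) div 2) .. (Q - 1) div 2})"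
  using assms by (cases "even Q") (auto; presburger)+

lemma close_aux:
  fixes Q :: int assumes "Q \<ge> 1"
  shows "\<forall>k\<in>(if even Q then {- (Q div 2) .. Q div 2 - 1} else {- ((Q - 1) div 2) .. (Q - 1) div 2}).
         \<forall>k'\<in>(if even Q then {- (Q div 2) .. Q div 2 - 1} else {- ((Q - 1) div 2) .. (Q - 1) div 2}).
           \<bar>k - k'\<bar> < Q"
  using assms by (cases "even Q") (auto; presburger)+

theorem theorem2:
  fixes M :: "'a measure" and X :: "'a \<Rightarrow> real" and q r :: nat
  assumes "prob_space M"
    and "X \<in> borel_measurable M"
    and "q \<ge> 1"
    and "AE x in M. real q * X x \<in> \<int>"
    and "r \<ge> 1"
    and "integrable M (\<lambda>x. \<bar>X x\<bar> ^ r)"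
  shows "complex_of_real (\<integral>x. real_of_int \<lfloor>X x\<rfloor> ^ r \<partial>M)
           = \<i> powi (- int r) *
             (\<Sum>j<q. nth_deriv r (\<lambda>t. h q t * charfun M X t) (2 * pi * real j))
     \<and> complex_of_real (\<integral>x. real_of_int (round_near (X x)) ^ r \<partial>M)
           = \<i> powi (- int r) *
             (\<Sum>j<q. nth_deriv r (\<lambda>t. h_tilde q t * charfun M X t) (2 * pi * real j))"
proof
  show "complex_of_real (\<integral>x. real_of_int \<lfloor>X x\<rfloor> ^ r \<partial>M)
           = \<i> powi (- int r) *
             (\<Sum>j<q. nth_deriv r (\<lambda>t. h q t * charfun M X t) (2 * pi * real j))"
  proof (rule main_gen[where K="{0..<int q}"])
    show "AE x in M. \<exists>k0\<in>{0..<int q}. real_of_int \<lfloor>X x\<rfloor> = X x - of_int k0 / real q \<and>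
                 (\<forall>k\<in>{0..<int q}. X x - of_int k / real q \<in> \<int> \<longrightarrow> k = k0)"
      using assms(4)
    proof eventually_elim
      case (elim x)
      then obtain m where m: "real q * X x = of_int m" by (auto elim: Ints_cases)
      have qpos: "real q > 0" using assms(3) by simp
      have "real q * of_int \<lfloor>X x\<rfloor> \<le> real q * X x"
        using qpos by (intro mult_left_mono) auto
      then have lo: "int q * \<lfloor>X x\<rfloor> \<le> m" using m by (metis of_int_le_iff of_int_mult of_int_of_nat_eq)
      have "real q * X x < real q * (of_int \<lfloor>X x\<rfloor> + 1)"
        using qpos by (intro mult_strict_left_mono) auto
      then have hi: "m < int q * \<lfloor>X x\<rfloor> + int q" using m
        by (simp add: algebra_simps) (metis of_int_less_iff of_int_mult of_int_of_nat_eq of_int_add)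
      show ?case
        by (rule rep_lemma[OF assms(3) m, where kz="m - int q * \<lfloor>X x\<rfloor>"]) (use lo hi in auto)
    qed
    show "(\<lambda>x. real_of_int \<lfloor>X x\<rfloor>) \<in> borel_measurable M" using assms(2) by measurable
    show "h q t = 1 / of_nat q * (\<Sum>k\<in>{0..<int q}. exp (- \<i> * of_real t * of_int k / of_nat q))" for t
      unfolding h_def by (rule refl)
  qed (use assms in auto)
next
  define K where "K = (if even q then {- (int q div 2) .. int q div 2 - 1}
       else {- ((int q - 1) div 2) .. (int q - 1) div 2})"
  show "complex_of_real (\<integral>x. real_of_int (round_near (X x)) ^ r \<partial>M)
           = \<i> powi (- int r) *
             (\<Sum>j<q. nth_deriv r (\<lambda>t. h_tilde q t * charfun M X t) (2 * pi * real j))"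
  proof (rule main_gen[where K=K])
    show "finite K" unfolding K_def by auto
    show "AE x in M. \<exists>k0\<in>K. real_of_int (round_near (X x)) = X x - of_int k0 / real q \<and>
                 (\<forall>k\<in>K. X x - of_int k / real q \<in> \<int> \<longrightarrow> k = k0)"
      using assms(4)
    proof eventually_elim
      case (elim x)
      then obtain m where m: "real q * X x = of_int m" by (auto elim: Ints_cases)
      define n where "n = round_near (X x)"
      have qpos: "real q > 0" using assms(3) by simp
      have n1: "of_int n \<le> X x + 1/2" "X x + 1/2 < of_int n + 1"
        unfolding n_def round_near_def by linarith+
      have "2 * real q * of_int n \<le> 2 * real q * (X x + 1/2)"
        using qpos n1 by (intro mult_left_mono) auto
      then have "real_of_int (2 * int q * n) \<le> real_of_int (2 * m + int q)"
        using m by (simp add: algebra_simps)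
      then have lo: "2 * int q * n \<le> 2 * m + int q" by (simp only: of_int_le_iff)
      have "2 * real q * (X x + 1/2) < 2 * real q * (of_int n + 1)"
        using qpos n1 by (intro mult_strict_left_mono) auto
      then have "real_of_int (2 * m + int q) < real_of_int (2 * int q * n + 2 * int q)"
        using m by (simp add: algebra_simps)
      then have hi: "2 * m + int q < 2 * int q * n + 2 * int q" by (simp only: of_int_less_iff)
      have "m - int q * n \<in> K"
        using inK_aux[of "int q" "m - int q * n"] lo hi unfolding K_def by (simp add: algebra_simps)
      moreover have "\<forall>k\<in>K. \<forall>k'\<in>K. \<bar>k - k'\<bar> < int q"
        using close_aux[of "int q"] assms(3) unfolding K_def by simp
      ultimately show ?case unfolding n_def[symmetric]
        by (intro rep_lemma[OF assms(3) m]) auto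
    qed
    show "(\<lambda>x. real_of_int (round_near (X x))) \<in> borel_measurable M"
      unfolding round_near_def using assms(2) by measurable
    show "h_tilde q t = 1 / of_nat q * (\<Sum>k\<in>K. exp (- \<i> * of_real t * of_int k / of_nat q))" for t
      unfolding h_tilde_def K_def by simp
  qed (use assms in auto)
qed

end
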